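(* Assume $\mathcal{R}(\Theta^* )\le r$, $\mathcal{R}^*(\Phi(x))\le d$ for all $x\in\mathcal{X}$, and $\|\Phi(x)\|_{\max}\le\phi_{\max}$ for all $x\in\mathcal{X}$. Then for any $\delta\in(0,1)$ and $\epsilon>0$, $\|\nabla\mathcal{L}_n(\Theta^* )\|_{\max}\le\epsilon$ with probability at least $1-\delta$ as long as $n>\frac{8\phi_{\max}^2\exp(4rd)}{\epsilon^2}\log\big(\frac{2k_1k_2}{\delta}\big)$.
   Context: Let $\mathcal{X}\subset\mathbb{R}^p$ be a bounded set with finite positive volume and $\mathcal{U}_{\mathcal{X}}$ the uniform distribution on it. $\Phi:\mathcal{X}\to\mathbb{R}^{k_1\times k_2}$ is a natural statistic, $\langle\langle M,N\rangle\rangle=\sum_{i,j}M_{ij}N_{ij}$, $f_{\mathbf{x}}(x;\Theta)\propto\exp(\langle\langle\Theta,\Phi(x)\rangle\rangle)$ on $\mathcal{X}$. $\mathcal{R}$ is a norm with dual norm $\mathcal{R}^*(M)=\sup\{\langle\langle M,N\rangle\rangle:\mathcal{R}(N)\le1\}$; $r,d,\phi_{\max}$ constants; $\|M\|_{\max}=\max_{ij}|M_{ij}|$. $x^{(1)},\dots,x^{(n)}$ i.i.d. from $f_{\mathbf{x}}(\cdot;\Theta^* )$; $\tilde\Phi(x)=\Phi(x)-\mathbb{E}_{\mathcal{U}_{\mathcal{X}}}[\Phi]$; $\mathcal{L}_n(\Theta)=\frac1n\sum_{t=1}^n\exp(-\langle\langle\Theta,\tilde\Phi(x^{(t)})\rangle\rangle)$,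 with $\nabla\mathcal{L}_n(\Theta^* )$ the $k_1\times k_2$ matrix of partial derivatives $\partial\mathcal{L}_n/\partial\Theta_{uv}$ at $\Theta^*$. *)

theory Defs
  imports "HOL-Probability.Probability"
begin

type_synonym ('k1, 'k2) mat = "real ^ 'k2 ^ 'k1"

definition frob_ip :: "('k1::finite, 'k2::finite) mat \<Rightarrow> ('k1, 'k2) mat \<Rightarrow> real" where
  "frob_ip M N = (\<Sum>i\<in>UNIV. \<Sum>j\<in>UNIV. M $ i $ j * N $ i $ j)"

definition max_norm :: "('k1::finite, 'k2::finite) mat \<Rightarrow> real" where
  "max_norm M = Max (range (\<lambda>(i, j). \<bar>M $ i $ j\<bar>))"

definition is_norm :: "(('k1::finite, 'k2::finite) mat \<Rightarrow> real) \<Rightarrow> bool" where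
  "is_norm R \<longleftrightarrow> (\<forall>M. 0 \<le> R M) \<and> (\<forall>M. R M = 0 \<longleftrightarrow> M = 0)
     \<and> (\<forall>c M. R (c *\<^sub>R M) = \<bar>c\<bar> * R M) \<and> (\<forall>M N. R (M + N) \<le> R M + R N)"

definition dual_norm :: "(('k1::finite, 'k2::finite) mat \<Rightarrow> real) \<Rightarrow> ('k1, 'k2) mat \<Rightarrow> real" where
  "dual_norm R M = Sup {frob_ip M N | N. R N \<le> 1}"

definition exp_fam_density ::
  "'p::euclidean_space set \<Rightarrow> ('p \<Rightarrow> ('k1::finite, 'k2::finite) mat) \<Rightarrow> ('k1, 'k2) mat \<Rightarrow> 'p \<Rightarrow> real" where
  "exp_fam_density X \<Phi> \<Theta> x =
     indicator X x * exp (frob_ip \<Theta> (\<Phi> x)) /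
     (\<integral>y. indicator X y * exp (frob_ip \<Theta> (\<Phi> y)) \<partial>lebesgue)"

definition exp_fam_dist ::
  "'p::euclidean_space set \<Rightarrow> ('p \<Rightarrow> ('k1::finite, 'k2::finite) mat) \<Rightarrow> ('k1, 'k2) mat \<Rightarrow> 'p measure" where
  "exp_fam_dist X \<Phi> \<Theta> = density lebesgue (\<lambda>x. ennreal (exp_fam_density X \<Phi> \<Theta> x))"

definition Phi_tilde ::
  "'p::euclidean_space set \<Rightarrow> ('p \<Rightarrow> ('k1::finite, 'k2::finite) mat) \<Rightarrow> 'p \<Rightarrow> ('k1, 'k2) mat" where
  "Phi_tilde X \<Phi> x = \<Phi> x - (1 / measure lebesgue X) *\<^sub>R (\<integral>y. indicator X y *\<^sub>R \<Phi> y \<partial>lebesgue)"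

definition loss_n ::
  "'p::euclidean_space set \<Rightarrow> ('p \<Rightarrow> ('k1::finite, 'k2::finite) mat) \<Rightarrow> nat \<Rightarrow> (nat \<Rightarrow> 'p)
     \<Rightarrow> ('k1, 'k2) mat \<Rightarrow> real" where
  "loss_n X \<Phi> n xs \<Theta> = (1 / real n) * (\<Sum>t<n. exp (- frob_ip \<Theta> (Phi_tilde X \<Phi> (xs t))))"

definition unit_mat :: "'k1::finite \<Rightarrow> 'k2::finite \<Rightarrow> ('k1, 'k2) mat" where
  "unit_mat u v = (\<chi> i j. if i = u \<and> j = v then 1 else 0)"

definition grad_loss_n ::
  "'p::euclidean_space set \<Rightarrow> ('p \<Rightarrow> ('k1::finite, 'k2::finite) mat) \<Rightarrow> nat \<Rightarrow> (nat \<Rightarrow> 'p)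
     \<Rightarrow> ('k1, 'k2) mat \<Rightarrow> ('k1, 'k2) mat" where
  "grad_loss_n X \<Phi> n xs \<Theta> =
     (\<chi> u v. deriv (\<lambda>s. loss_n X \<Phi> n xs (\<Theta> + s *\<^sub>R unit_mat u v)) 0)"

end

theory Submission
  imports Defs
begin

lemma frob_ip_inner: "frob_ip M N = inner M N"
  unfolding frob_ip_def inner_vec_def by (simp add: inner_real_def)

lemma is_normD:
  assumes "is_norm R"
  shows "R M \<ge> 0" "R M = 0 \<longleftrightarrow> M = 0" "R (c *\<^sub>R M) = \<bar>c\<bar> * R M" "R (M + N) \<le> R M + R N"
  using assms unfolding is_norm_def by auto

lemma is_norm_sum:
  assumes "is_norm R" "finite A"
  shows "R (sum f A) \<le> (\<Sum>a\<in>A. R (f a))"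
  using assms(2)
proof induction
  case empty
  then show ?case using is_normD(2)[OF assms(1), of 0] by simp
next
  case (insert x F)
  then show ?case using is_normD(4)[OF assms(1), of "f x" "sum f F"] by simp
qed

lemma is_norm_minus:
  assumes "is_norm R"
  shows "R (- M) = R M"
  using is_normD(3)[OF assms, of "-1" M] by simp

lemma mat_decomp:
  fixes N :: "real ^ 'k2::finite ^ 'k1::finite"
  shows "N = (\<Sum>i\<in>UNIV. \<Sum>j\<in>UNIV. N $ i $ j *\<^sub>R unit_mat i j)"
proof -
  have *: "(\<Sum>x\<in>UNIV. \<Sum>xa\<in>UNIV. if i = x \<and> ia = xa then f x xa else 0) = (f i ia::real)"
    for i :: 'k1 and ia :: 'k2 and f
  proof -
    have "(\<Sum>x\<in>UNIV. \<Sum>xa\<in>UNIV. if i = x \<and> ia = xa then f x xa else 0)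
        = (\<Sum>x\<in>UNIV. if i = x then (\<Sum>xa\<in>UNIV. if ia = xa then f x xa else 0) else 0)"
      by (intro sum.cong) auto
    also have "\<dots> = f i ia" by (simp add: sum.delta')
    finally show ?thesis .
  qed
  show ?thesis unfolding unit_mat_def
    by (simp add: vec_eq_iff sum_component if_distrib * cong: if_cong)
qed

lemma is_norm_upper:
  fixes R :: "real ^ 'k2::finite ^ 'k1::finite \<Rightarrow> real"
  assumes "is_norm R"
  shows "\<exists>C\<ge>0. \<forall>N. R N \<le> C * norm N"
proof -
  define C where "C = (\<Sum>i\<in>UNIV. \<Sum>j\<in>UNIV. R (unit_mat i j :: real ^ 'k2 ^ 'k1))"
  have C0: "C \<ge> 0" unfolding C_def using is_normD(1)[OF assms] by (intro sum_nonneg) auto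
  have "R N \<le> C * norm N" for N
  proof -
    have "R N = R (\<Sum>i\<in>UNIV. \<Sum>j\<in>UNIV. N $ i $ j *\<^sub>R unit_mat i j)"
      using mat_decomp[of N] by simp
    also have "\<dots> \<le> (\<Sum>i\<in>UNIV. R (\<Sum>j\<in>UNIV. N $ i $ j *\<^sub>R unit_mat i j))"
      by (rule is_norm_sum[OF assms]) simp
    also have "\<dots> \<le> (\<Sum>i\<in>UNIV. \<Sum>j\<in>UNIV. R (N $ i $ j *\<^sub>R unit_mat i j))"
      by (intro sum_mono is_norm_sum[OF assms]) simp
    also have "\<dots> = (\<Sum>i\<in>UNIV. \<Sum>j\<in>UNIV. \<bar>N $ i $ j\<bar> * R (unit_mat i j))"
      using is_normD(3)[OF assms] by simp
    also have "\<dots> \<le> (\<Sum>i\<in>UNIV. \<Sum>j\<in>UNIV. norm N * R (unit_mat i j))"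
    proof (intro sum_mono mult_right_mono)
      fix i j
      show "\<bar>N $ i $ j\<bar> \<le> norm N"
        using component_le_norm_cart[where x="N $ i" and i=j] Finite_Cartesian_Product.norm_nth_le[where x=N and i=i] by linarith
      show "0 \<le> R (unit_mat i j)" using is_normD(1)[OF assms] .
    qed
    also have "\<dots> = C * norm N" unfolding C_def by (simp add: sum_distrib_left mult.commute)
    finally show ?thesis .
  qed
  with C0 show ?thesis by blast
qed

lemma is_norm_continuous:
  fixes R :: "real ^ 'k2::finite ^ 'k1::finite \<Rightarrow> real"
  assumes "is_norm R"
  shows "continuous_on S R"
proof -
  obtain C where C: "C \<ge> 0" "\<And>N. R N \<le> C * norm N" using is_norm_upper[OF assms] by blast
  have lip: "\<bar>R M - R N\<bar> \<le> C * norm (M - N)" for M N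
  proof -
    have "R M \<le> R (M - N) + R N" using is_normD(4)[OF assms, of "M - N" N] by simp
    moreover have "R N \<le> R (N - M) + R M" using is_normD(4)[OF assms, of "N - M" M] by simp
    moreover have "R (N - M) = R (M - N)" using is_norm_minus[OF assms, of "M - N"] by simp
    ultimately show ?thesis using C(2)[of "M - N"] by linarith
  qed
  show ?thesis
    unfolding continuous_on_iff
  proof (intro ballI allI impI)
    fix x and e :: real assume e: "e > 0"
    show "\<exists>d>0. \<forall>x'\<in>S. dist x' x < d \<longrightarrow> dist (R x') (R x) < e"
    proof (intro exI[of _ "e / (C + 1)"] conjI ballI impI)
      show "e / (C + 1) > 0" using e C(1) by simp
      fix x' assume "dist x' x < e / (C + 1)"
      hence "norm (x' - x) * (C + 1) < e" using C(1) by (simp add: dist_norm field_simps)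
      moreover have "C * norm (x' - x) \<le> norm (x' - x) * (C + 1)" by (simp add: algebra_simps)
      ultimately show "dist (R x') (R x) < e" using lip[of x' x] by (simp add: dist_real_def)
    qed
  qed
qed

lemma is_norm_lower:
  fixes R :: "real ^ 'k2::finite ^ 'k1::finite \<Rightarrow> real"
  assumes "is_norm R"
  shows "\<exists>m>0. \<forall>N. m * norm N \<le> R N"
proof -
  have "compact (sphere (0 :: real ^ 'k2 ^ 'k1) 1)" by simp
  moreover have "sphere (0 :: real ^ 'k2 ^ 'k1) 1 \<noteq> {}" by (simp add: sphere_eq_empty)
  ultimately obtain x0 where x0: "x0 \<in> sphere 0 1" "\<And>y. y \<in> sphere 0 1 \<Longrightarrow> R x0 \<le> R y"
    using continuous_attains_inf[of "sphere (0 :: real ^ 'k2 ^ 'k1) 1" R] is_norm_continuous[OF assms]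
    by blast
  have "x0 \<noteq> 0" using x0(1) by auto
  hence m: "R x0 > 0" using is_normD(1,2)[OF assms, of x0] by auto
  have "R x0 * norm N \<le> R N" for N
  proof (cases "N = 0")
    case True then show ?thesis using is_normD(2)[OF assms, of 0] by simp
  next
    case False
    have "R x0 \<le> R ((1 / norm N) *\<^sub>R N)" using False by (intro x0(2)) simp
    also have "\<dots> = R N / norm N" using is_normD(3)[OF assms, of "1 / norm N" N] by simp
    finally show ?thesis using False by (simp add: field_simps)
  qed
  with m show ?thesis by blast
qed

lemma dual_bdd:
  fixes R :: "real ^ 'k2::finite ^ 'k1::finite \<Rightarrow> real"
  assumes "is_norm R"
  shows "bdd_above {frob_ip M N | N. R N \<le> 1}"
proof -
  obtain m where m: "m > 0" "\<And>N. m * norm N \<le> R N" using is_norm_lower[OF assms] by blast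
  show ?thesis
  proof (rule bdd_aboveI[of _ "norm M / m"], safe)
    fix N assume "R N \<le> 1"
    hence "norm N \<le> 1 / m" using m(2)[of N] m(1) by (simp add: field_simps)
    hence "norm M * norm N \<le> norm M * (1 / m)" by (intro mult_left_mono) simp_all
    moreover have "frob_ip M N \<le> norm M * norm N"
      unfolding frob_ip_inner by (rule norm_cauchy_schwarz)
    ultimately show "frob_ip M N \<le> norm M / m" by simp
  qed
qed

lemma dual_nonneg:
  assumes "is_norm R"
  shows "dual_norm R M \<ge> 0"
proof -
  have "frob_ip M 0 \<in> {frob_ip M N | N. R N \<le> 1}" using is_normD(2)[OF assms, of 0] by auto
  hence "frob_ip M 0 \<le> dual_norm R M" unfolding dual_norm_def
    by (intro cSup_upper dual_bdd[OF assms])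
  thus ?thesis by (simp add: frob_ip_def)
qed

lemma holder:
  assumes "is_norm R"
  shows "frob_ip T M \<le> R T * dual_norm R M"
proof (cases "T = 0")
  case True then show ?thesis using is_normD(2)[OF assms, of 0] by (simp add: frob_ip_def)
next
  case False
  hence RT: "R T > 0" using is_normD(1,2)[OF assms, of T] by auto
  have "R ((1 / R T) *\<^sub>R T) = 1" using is_normD(3)[OF assms, of "1 / R T" T] RT by simp
  hence "frob_ip M ((1 / R T) *\<^sub>R T) \<le> dual_norm R M" unfolding dual_norm_def
    by (intro cSup_upper dual_bdd[OF assms]) auto
  hence "frob_ip T M / R T \<le> dual_norm R M" by (simp add: frob_ip_inner inner_commute)
  thus ?thesis using RT by (simp add: field_simps)
qed

lemma holder_abs:
  assumes "is_norm R"
  shows "\<bar>frob_ip T M\<bar> \<le> R T * dual_norm R M"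
proof -
  have "frob_ip (-T) M \<le> R (-T) * dual_norm R M" by (rule holder[OF assms])
  hence "- frob_ip T M \<le> R T * dual_norm R M" by (simp add: frob_ip_inner is_norm_minus[OF assms])
  thus ?thesis using holder[OF assms, of T M] by linarith
qed

lemma frob_unit: "frob_ip (unit_mat u v) M = M $ u $ v"
proof -
  have h: "(\<Sum>j\<in>UNIV. (if i = u \<and> j = v then 1 else 0) * M $ i $ j) = (if i = u then M $ i $ v else 0)"
    for i
  proof (cases "i = u")
    case True
    have h2: "(\<Sum>j\<in>UNIV. (if j = v then 1 else 0) * M $ u $ j) = (\<Sum>j\<in>UNIV. if j = v then M $ u $ j else 0)"
      by (rule sum.cong) auto
    show ?thesis using True h2 by simp
  qed simp
  have "frob_ip (unit_mat u v) M = (\<Sum>i\<in>UNIV. if i = u then M $ i $ v else 0)"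
    unfolding frob_ip_def unit_mat_def by (simp add: h)
  also have "\<dots> = M $ u $ v" by simp
  finally show ?thesis .
qed

lemma frob_shift: "frob_ip (T + s *\<^sub>R unit_mat u v) M = frob_ip T M + s * M $ u $ v"
  using frob_unit[of u v M] by (simp add: frob_ip_inner inner_add_left)

lemma grad_formula:
  "grad_loss_n X \<Phi> n xs T $ u $ v =
     - (1 / real n) * (\<Sum>t<n. Phi_tilde X \<Phi> (xs t) $ u $ v * exp (- frob_ip T (Phi_tilde X \<Phi> (xs t))))"
proof -
  define a where "a t = frob_ip T (Phi_tilde X \<Phi> (xs t))" for t
  define b where "b t = Phi_tilde X \<Phi> (xs t) $ u $ v" for t
  have eq: "(\<lambda>s. loss_n X \<Phi> n xs (T + s *\<^sub>R unit_mat u v)) = (\<lambda>s. (1 / real n) * (\<Sum>t<n. exp (- (a t + s * b t))))"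
    unfolding loss_n_def a_def b_def frob_shift by simp
  have "((\<lambda>s. (1 / real n) * (\<Sum>t<n. exp (- (a t + s * b t)))) has_real_derivative
          (1 / real n) * (\<Sum>t<n. exp (- (a t + 0 * b t)) * (- (0 + 1 * b t)))) (at 0)"
    by (intro derivative_eq_intros) auto
  hence "deriv (\<lambda>s. loss_n X \<Phi> n xs (T + s *\<^sub>R unit_mat u v)) 0
         = (1 / real n) * (\<Sum>t<n. exp (- (a t + 0 * b t)) * (- (0 + 1 * b t)))"
    unfolding eq by (rule DERIV_imp_deriv)
  also have "\<dots> = - (1 / real n) * (\<Sum>t<n. b t * exp (- a t))"
    by (simp add: sum_negf mult.commute)
  finally show ?thesis unfolding grad_loss_n_def a_def b_def by simp
qed

lemma max_norm_le:
  fixes M :: "real ^ 'k2::finite ^ 'k1::finite"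
  assumes "max_norm M \<le> c"
  shows "\<bar>M $ i $ j\<bar> \<le> c"
proof -
  have "\<bar>M $ i $ j\<bar> \<in> range (\<lambda>(i, j). \<bar>M $ i $ j\<bar>)" by (auto intro: image_eqI[of _ _ "(i,j)"])
  hence "\<bar>M $ i $ j\<bar> \<le> max_norm M" unfolding max_norm_def by (intro Max_ge) auto
  thus ?thesis using assms by simp
qed

lemma cont_comp_meas:
  assumes "continuous_on UNIV g" "f \<in> borel_measurable M"
  shows "(\<lambda>x. g (f x)) \<in> borel_measurable M"
  using measurable_compose[OF assms(2) borel_measurable_continuous_onI[OF assms(1)]] by simp

lemma norm_le_entries:
  fixes M :: "real ^ 'k2::finite ^ 'k1::finite"
  assumes "\<And>i j. \<bar>M $ i $ j\<bar> \<le> c"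
  shows "norm M \<le> real CARD('k1) * real CARD('k2) * c"
proof -
  have "norm M \<le> (\<Sum>i\<in>UNIV. norm (M $ i))" unfolding norm_vec_def by (rule L2_set_le_sum) simp
  also have "\<dots> \<le> (\<Sum>i\<in>UNIV. \<Sum>j\<in>UNIV. norm (M $ i $ j))"
    by (intro sum_mono) (simp add: norm_le_l1_cart)
  also have "\<dots> \<le> (\<Sum>i\<in>(UNIV::'k1 set). \<Sum>j\<in>(UNIV::'k2 set). c)" using assms by (intro sum_mono) auto
  finally show ?thesis by simp
qed

definition cbar :: "(real ^ 'p::finite) set \<Rightarrow> (real ^ 'p \<Rightarrow> real ^ 'k2::finite ^ 'k1::finite) \<Rightarrow> real ^ 'k2 ^ 'k1"
  where "cbar X \<Phi> = (1 / measure lebesgue X) *\<^sub>R (\<integral>y. indicator X y *\<^sub>R \<Phi> y \<partial>lebesgue)"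

lemma Phi_tilde_cbar: "Phi_tilde X \<Phi> x = \<Phi> x - cbar X \<Phi>"
  unfolding Phi_tilde_def cbar_def ..

definition gfun :: "(real ^ 'p::finite) set \<Rightarrow> (real ^ 'p \<Rightarrow> real ^ 'k2::finite ^ 'k1::finite) \<Rightarrow> real ^ 'k2 ^ 'k1 \<Rightarrow> real ^ 'p \<Rightarrow> real"
  where "gfun X \<Phi> T y = indicator X y * exp (frob_ip T (\<Phi> y))"

definition Zc :: "(real ^ 'p::finite) set \<Rightarrow> (real ^ 'p \<Rightarrow> real ^ 'k2::finite ^ 'k1::finite) \<Rightarrow> real ^ 'k2 ^ 'k1 \<Rightarrow> real"
  where "Zc X \<Phi> T = (\<integral>y. gfun X \<Phi> T y \<partial>lebesgue)"

lemma density_eq: "exp_fam_density X \<Phi> T x = gfun X \<Phi> T x / Zc X \<Phi> T"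
  unfolding exp_fam_density_def gfun_def Zc_def ..

context
  fixes X :: "(real ^ 'p::finite) set"
    and \<Phi> :: "real ^ 'p \<Rightarrow> real ^ 'k2::finite ^ 'k1::finite"
    and R :: "real ^ 'k2 ^ 'k1 \<Rightarrow> real"
    and \<Theta>s :: "real ^ 'k2 ^ 'k1"
    and r d \<phi>max :: real
  assumes X_meas: "X \<in> sets lebesgue"
    and X_bounded: "bounded X"
    and X_pos: "0 < emeasure lebesgue X"
    and Phi_meas: "\<Phi> \<in> borel_measurable lebesgue"
    and R_norm: "is_norm R"
    and R_Theta: "R \<Theta>s \<le> r"
    and dual_bound: "\<forall>x\<in>X. dual_norm R (\<Phi> x) \<le> d"
    and max_bound: "\<forall>x\<in>X. max_norm (\<Phi> x) \<le> \<phi>max"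
begin

lemma XL: "X \<in> lmeasurable" using bounded_set_imp_lmeasurable X_bounded X_meas by blast

lemma X_fin: "emeasure lebesgue X < \<infinity>" using XL unfolding fmeasurable_def by blast

lemma mX_pos: "measure lebesgue X > 0"
proof -
  have "emeasure lebesgue X = ennreal (measure lebesgue X)"
    using X_fin by (intro emeasure_eq_ennreal_measure) auto
  thus ?thesis using X_pos by (simp add: ennreal_less_zero_iff)
qed

lemma X_ne: "X \<noteq> {}" using X_pos by auto

lemma Phi_entry: "x \<in> X \<Longrightarrow> \<bar>\<Phi> x $ i $ j\<bar> \<le> \<phi>max"
  using max_bound max_norm_le by blast

lemma phi_nonneg: "\<phi>max \<ge> 0"
  using X_ne Phi_entry by (meson abs_ge_zero ex_in_conv order_trans)

lemma rd_nonneg: "r \<ge> 0" "d \<ge> 0"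
  using X_ne dual_bound dual_nonneg[OF R_norm] is_normD(1)[OF R_norm, of \<Theta>s] R_Theta
  by (auto intro: order_trans)

lemma inner_bound: "x \<in> X \<Longrightarrow> \<bar>frob_ip \<Theta>s (\<Phi> x)\<bar> \<le> r * d"
proof -
  assume x: "x \<in> X"
  have "\<bar>frob_ip \<Theta>s (\<Phi> x)\<bar> \<le> R \<Theta>s * dual_norm R (\<Phi> x)" by (rule holder_abs[OF R_norm])
  also have "\<dots> \<le> r * d"
    using x dual_bound R_Theta is_normD(1)[OF R_norm, of \<Theta>s] dual_nonneg[OF R_norm, of "\<Phi> x"] rd_nonneg
    by (intro mult_mono) auto
  finally show ?thesis .
qed


lemma meas_frob: "(\<lambda>y. frob_ip T (\<Phi> y)) \<in> borel_measurable lebesgue"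
  unfolding frob_ip_inner by (intro borel_measurable_inner Phi_meas borel_measurable_const)

lemma meas_entry: "(\<lambda>y. \<Phi> y $ u $ v) \<in> borel_measurable lebesgue"
proof -
  have "continuous_on UNIV (\<lambda>M::real ^ 'k2 ^ 'k1. M $ u $ v)"
    by (intro continuous_intros)
  thus ?thesis by (rule cont_comp_meas[OF _ Phi_meas])
qed

lemma int_bounded:
  fixes h :: "real ^ 'p \<Rightarrow> real"
  assumes "h \<in> borel_measurable lebesgue" "\<And>y. y \<in> X \<Longrightarrow> \<bar>h y\<bar> \<le> B"
  shows "integrable lebesgue (\<lambda>y. indicator X y * h y)"
  using integrableI_bounded_set_indicator[OF X_meas assms(1) X_fin, of B] assms(2) by simp

lemma int_ind: "integrable lebesgue (indicator X :: _ \<Rightarrow> real)"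
  using XL lmeasurable_iff_integrable by blast

lemma avg_bound:
  fixes h :: "real ^ 'p \<Rightarrow> real"
  assumes "h \<in> borel_measurable lebesgue" "\<And>y. y \<in> X \<Longrightarrow> \<bar>h y\<bar> \<le> B"
  shows "\<bar>(1 / measure lebesgue X) * (\<integral>y. indicator X y * h y \<partial>lebesgue)\<bar> \<le> B"
proof -
  have "\<bar>\<integral>y. indicator X y * h y \<partial>lebesgue\<bar> \<le> (\<integral>y. indicator X y * B \<partial>lebesgue)"
    using assms int_ind
    by (intro integral_abs_bound_integral int_bounded) (auto simp: indicator_def)
  also have "\<dots> = B * measure lebesgue X"
    using int_ind by (simp add: integral_indicator mult.commute)
  finally show ?thesis using mX_pos by (simp add: abs_mult field_simps)
qed

lemma int_Phi: "integrable lebesgue (\<lambda>y. indicator X y *\<^sub>R \<Phi> y)"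
proof (rule integrableI_bounded_set_indicator[OF X_meas Phi_meas X_fin])
  show "AE x\<in>X in lebesgue. norm (\<Phi> x) \<le> real CARD('k1) * real CARD('k2) * \<phi>max"
    using Phi_entry by (intro AE_I2 impI norm_le_entries) auto
qed

lemma cbar_entry:
  "cbar X \<Phi> $ u $ v = (1 / measure lebesgue X) * (\<integral>y. indicator X y * \<Phi> y $ u $ v \<partial>lebesgue)"
proof -
  have bl: "bounded_linear (\<lambda>M::real ^ 'k2 ^ 'k1. M $ u $ v)"
    using bounded_linear_compose[OF bounded_linear_vec_nth[of v] bounded_linear_vec_nth[of u]] by simp
  have "(\<integral>y. indicator X y *\<^sub>R \<Phi> y \<partial>lebesgue) $ u $ v = (\<integral>y. (indicator X y *\<^sub>R \<Phi> y) $ u $ v \<partial>lebesgue)"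
    using integral_bounded_linear[OF bl int_Phi] by simp
  thus ?thesis unfolding cbar_def by simp
qed

lemma cbar_entry_bound: "\<bar>cbar X \<Phi> $ u $ v\<bar> \<le> \<phi>max"
  unfolding cbar_entry using Phi_entry by (intro avg_bound meas_entry)

lemma cbar_frob:
  "frob_ip \<Theta>s (cbar X \<Phi>) = (1 / measure lebesgue X) * (\<integral>y. indicator X y * frob_ip \<Theta>s (\<Phi> y) \<partial>lebesgue)"
proof -
  have "inner \<Theta>s (\<integral>y. indicator X y *\<^sub>R \<Phi> y \<partial>lebesgue) = (\<integral>y. inner \<Theta>s (indicator X y *\<^sub>R \<Phi> y) \<partial>lebesgue)"
    using integral_bounded_linear[OF bounded_linear_inner_right int_Phi] by simp
  thus ?thesis unfolding cbar_def frob_ip_inner by simp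
qed

lemma cbar_frob_bound: "\<bar>frob_ip \<Theta>s (cbar X \<Phi>)\<bar> \<le> r * d"
  unfolding cbar_frob using inner_bound by (intro avg_bound meas_frob)

lemma Zc_pos: "Zc X \<Phi> \<Theta>s > 0"
proof -
  have "(\<integral>y. indicator X y * exp (- (r * d)) \<partial>lebesgue) \<le> Zc X \<Phi> \<Theta>s"
    unfolding Zc_def gfun_def
  proof (rule integral_mono)
    show "integrable lebesgue (\<lambda>y. indicator X y * exp (- (r * d)))"
      using int_ind by simp
    show "integrable lebesgue (\<lambda>y. indicator X y * exp (frob_ip \<Theta>s (\<Phi> y)))"
    proof (rule int_bounded)
      show "(\<lambda>y. exp (frob_ip \<Theta>s (\<Phi> y))) \<in> borel_measurable lebesgue" using meas_frob by measurable
      fix y assume "y \<in> X"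
      thus "\<bar>exp (frob_ip \<Theta>s (\<Phi> y))\<bar> \<le> exp (r * d)" using inner_bound[of y] by simp
    qed
    fix y
    show "indicator X y * exp (- (r * d)) \<le> indicator X y * exp (frob_ip \<Theta>s (\<Phi> y))"
      using inner_bound[of y] by (auto simp: indicator_def)
  qed
  moreover have "(\<integral>y. indicator X y * exp (- (r * d)) \<partial>lebesgue) = exp (- (r * d)) * measure lebesgue X"
    using int_ind by (simp add: integral_indicator mult.commute)
  ultimately show ?thesis using mX_pos by (smt (verit) exp_gt_zero mult_pos_pos)
qed


lemma int_g: "integrable lebesgue (gfun X \<Phi> \<Theta>s)"
  unfolding gfun_def
proof (rule int_bounded)
  show "(\<lambda>y. exp (frob_ip \<Theta>s (\<Phi> y))) \<in> borel_measurable lebesgue" using meas_frob by measurable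
  fix y assume "y \<in> X"
  thus "\<bar>exp (frob_ip \<Theta>s (\<Phi> y))\<bar> \<le> exp (r * d)" using inner_bound[of y] by simp
qed

lemma g_nonneg: "gfun X \<Phi> \<Theta>s y \<ge> 0"
  unfolding gfun_def by simp

lemma meas_dens: "(\<lambda>x. exp_fam_density X \<Phi> \<Theta>s x) \<in> borel_measurable lebesgue"
  unfolding density_eq using int_g by measurable

lemma dens_nonneg: "exp_fam_density X \<Phi> \<Theta>s x \<ge> 0"
  unfolding density_eq using g_nonneg Zc_pos by simp

lemma prob_P: "prob_space (exp_fam_dist X \<Phi> \<Theta>s)"
proof (rule prob_spaceI)
  have "emeasure (exp_fam_dist X \<Phi> \<Theta>s) (space (exp_fam_dist X \<Phi> \<Theta>s))
      = (\<integral>\<^sup>+ x. ennreal (exp_fam_density X \<Phi> \<Theta>s x) \<partial>lebesgue)"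
    unfolding exp_fam_dist_def using meas_dens
    by (simp add: emeasure_density)
  also have "\<dots> = ennreal (\<integral>x. exp_fam_density X \<Phi> \<Theta>s x \<partial>lebesgue)"
    unfolding density_eq using int_g g_nonneg Zc_pos
    by (intro nn_integral_eq_integral) auto
  also have "(\<integral>x. exp_fam_density X \<Phi> \<Theta>s x \<partial>lebesgue) = 1"
    unfolding density_eq using Zc_pos by (simp add: Zc_def)
  finally show "emeasure (exp_fam_dist X \<Phi> \<Theta>s) (space (exp_fam_dist X \<Phi> \<Theta>s)) = 1" by simp
qed

lemma AE_P: "AE x in exp_fam_dist X \<Phi> \<Theta>s. x \<in> X"
proof -
  have m: "(\<lambda>x. ennreal (exp_fam_density X \<Phi> \<Theta>s x)) \<in> borel_measurable lebesgue"
    using meas_dens by measurable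
  show ?thesis unfolding exp_fam_dist_def
    by (subst AE_density[OF m]) (auto intro!: AE_I2 simp: density_eq gfun_def indicator_def)
qed

definition Yf :: "'k1 \<Rightarrow> 'k2 \<Rightarrow> real ^ 'p \<Rightarrow> real" where
  "Yf u v x = Phi_tilde X \<Phi> x $ u $ v * exp (- frob_ip \<Theta>s (Phi_tilde X \<Phi> x))"

lemma Y_meas_leb: "Yf u v \<in> borel_measurable lebesgue"
proof -
  have "continuous_on UNIV (\<lambda>M. (M - cbar X \<Phi>) $ u $ v * exp (- inner \<Theta>s (M - cbar X \<Phi>)))"
    by (intro continuous_intros)
  from cont_comp_meas[OF this Phi_meas] show ?thesis
    unfolding Yf_def[abs_def] Phi_tilde_cbar frob_ip_inner by simp
qed

lemma Y_meas: "Yf u v \<in> borel_measurable (exp_fam_dist X \<Phi> \<Theta>s)"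
  unfolding exp_fam_dist_def using Y_meas_leb by simp

lemma Y_bound: "x \<in> X \<Longrightarrow> \<bar>Yf u v x\<bar> \<le> 2 * \<phi>max * exp (2 * r * d)"
proof -
  assume x: "x \<in> X"
  have a: "\<bar>Phi_tilde X \<Phi> x $ u $ v\<bar> \<le> 2 * \<phi>max"
    unfolding Phi_tilde_cbar using Phi_entry[OF x, of u v] cbar_entry_bound[of u v] by simp
  have "\<bar>frob_ip \<Theta>s (Phi_tilde X \<Phi> x)\<bar> \<le> 2 * r * d"
    unfolding Phi_tilde_cbar frob_ip_inner inner_diff_right
    using inner_bound[OF x] cbar_frob_bound unfolding frob_ip_inner by simp
  hence b: "exp (- frob_ip \<Theta>s (Phi_tilde X \<Phi> x)) \<le> exp (2 * r * d)" by simp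
  have "\<bar>Yf u v x\<bar> = \<bar>Phi_tilde X \<Phi> x $ u $ v\<bar> * exp (- frob_ip \<Theta>s (Phi_tilde X \<Phi> x))"
    unfolding Yf_def by (simp add: abs_mult)
  also have "\<dots> \<le> 2 * \<phi>max * exp (2 * r * d)"
    using a b by (intro mult_mono) auto
  finally show ?thesis .
qed

lemma Y_mean: "(\<integral>x. Yf u v x \<partial>exp_fam_dist X \<Phi> \<Theta>s) = 0"
proof -
  define c where "c = cbar X \<Phi>"
  define K where "K = exp (frob_ip \<Theta>s c) / Zc X \<Phi> \<Theta>s"
  have eq: "exp_fam_density X \<Phi> \<Theta>s x *\<^sub>R Yf u v x = K * (indicator X x * \<Phi> x $ u $ v) - K * c $ u $ v * indicator X x" for x
  proof -
    have "exp (frob_ip \<Theta>s (\<Phi> x)) * exp (- frob_ip \<Theta>s (\<Phi> x - c)) = exp (frob_ip \<Theta>s c)"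
      unfolding frob_ip_inner inner_diff_right by (simp add: exp_add[symmetric])
    hence "(exp (frob_ip \<Theta>s (\<Phi> x)) / Zc X \<Phi> \<Theta>s) * ((\<Phi> x - c) $ u $ v * exp (- frob_ip \<Theta>s (\<Phi> x - c)))
        = K * (\<Phi> x $ u $ v - c $ u $ v)"
      unfolding K_def by (simp add: field_simps)
    thus ?thesis
      unfolding density_eq gfun_def Yf_def Phi_tilde_cbar c_def[symmetric]
      by (simp add: indicator_def algebra_simps)
  qed
  have ient: "integrable lebesgue (\<lambda>x. indicator X x * \<Phi> x $ u $ v)"
    using Phi_entry by (intro int_bounded meas_entry)
  have "(\<integral>x. Yf u v x \<partial>exp_fam_dist X \<Phi> \<Theta>s) = (\<integral>x. exp_fam_density X \<Phi> \<Theta>s x *\<^sub>R Yf u v x \<partial>lebesgue)"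
    unfolding exp_fam_dist_def using Y_meas_leb meas_dens dens_nonneg
    by (intro integral_density) auto
  also have "\<dots> = K * (\<integral>x. indicator X x * \<Phi> x $ u $ v \<partial>lebesgue) - K * c $ u $ v * measure lebesgue X"
    unfolding eq using ient int_ind by (simp add: integral_indicator)
  also have "\<dots> = 0"
    using cbar_entry[of u v] mX_pos unfolding c_def by (simp add: field_simps)
  finally show ?thesis .
qed

end

lemma indep_components:
  fixes P :: "'a measure" and n :: nat
  assumes P: "prob_space P" and n: "n > 0"
  shows "prob_space.indep_vars (PiM {..<n} (\<lambda>_. P)) (\<lambda>_. P) (\<lambda>t xs. xs t) {..<n}"
proof -
  let ?M = "PiM {..<n} (\<lambda>_. P)"
  interpret M: prob_space ?M using P by (intro prob_space_PiM)
  define X' where "X' i = (\<lambda>xs::nat \<Rightarrow> 'a. xs (if i < n then i else 0))" for i :: nat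
  have rv: "X' i \<in> measurable ?M P" for i
    unfolding X'_def using n by (intro measurable_component_singleton) auto
  have "M.indep_vars (\<lambda>_. P) X' {..<n}"
  proof (subst M.indep_vars_iff_distr_eq_PiM)
    show "{..<n} \<noteq> {}" using n by auto
    show "X' i \<in> measurable ?M P" for i using rv by simp
    have "distr ?M ?M (\<lambda>x. \<lambda>i\<in>{..<n}. X' i x) = distr ?M ?M (\<lambda>x. x)"
      by (intro distr_cong) (auto simp: X'_def space_PiM PiE_def extensional_def restrict_def fun_eq_iff)
    also have "\<dots> = ?M" by (rule distr_id)
    also have "\<dots> = PiM {..<n} (\<lambda>i. distr ?M P (X' i))"
    proof (intro PiM_cong refl)
      fix i assume "i \<in> {..<n}"
      hence "X' i = (\<lambda>xs. xs i)" unfolding X'_def by auto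
      thus "P = distr ?M P (X' i)" using \<open>i \<in> {..<n}\<close> P distr_PiM_component[of "{..<n}" "\<lambda>_. P" i]
        by simp
    qed
    finally show "distr ?M (PiM {..<n} (\<lambda>_. P)) (\<lambda>x. \<lambda>i\<in>{..<n}. X' i x) = PiM {..<n} (\<lambda>i. distr ?M P (X' i))" .
  qed
  thus ?thesis
    by (rule M.indep_vars_cong[THEN iffD1, rotated -1]) (auto simp: X'_def)
qed

lemma hoeff_step:
  fixes Y :: "'a \<Rightarrow> real" and n :: nat
  assumes P: "prob_space P" and Ym: "Y \<in> borel_measurable P"
    and AEb: "AE x in P. \<bar>Y x\<bar> \<le> Bp" and mean: "integral\<^sup>L P Y = 0"
    and n: "n > 0" and Bp: "Bp > 0" and e: "\<epsilon> \<ge> 0"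
  shows "measure (PiM {..<n} (\<lambda>_. P)) {xs \<in> space (PiM {..<n} (\<lambda>_. P)). \<bar>\<Sum>t<n. Y (xs t)\<bar> \<ge> real n * \<epsilon>}
         \<le> 2 * exp (- (real n * \<epsilon>\<^sup>2 / (2 * Bp\<^sup>2)))"
proof -
  let ?M = "PiM {..<n} (\<lambda>_. P)"
  interpret M: prob_space ?M using P by (intro prob_space_PiM)
  have ind: "M.indep_vars (\<lambda>_. borel) (\<lambda>t xs. Y (xs t)) {..<n}"
    by (rule M.indep_vars_compose2[OF indep_components[OF P n]]) (use Ym in auto)
  have AEt: "AE xs in ?M. Y (xs t) \<in> {-Bp..Bp}" if "t \<in> {..<n}" for t
  proof -
    have "AE x in P. Y x \<in> {-Bp..Bp}" using AEb by eventually_elim (auto simp: abs_le_iff)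
    thus ?thesis using AE_PiM_component[of "{..<n}" "\<lambda>_. P" t "\<lambda>x. Y x \<in> {-Bp..Bp}"] P that by simp
  qed
  have expt: "M.expectation (\<lambda>xs. Y (xs t)) = 0" if "t \<in> {..<n}" for t
  proof -
    have "M.expectation (\<lambda>xs. Y (xs t)) = integral\<^sup>L (distr ?M P (\<lambda>xs. xs t)) Y"
      using that Ym by (intro integral_distr[symmetric] measurable_component_singleton) auto
    also have "\<dots> = integral\<^sup>L P Y" using that P distr_PiM_component[of "{..<n}" "\<lambda>_. P" t] by simp
    finally show ?thesis using mean by simp
  qed
  interpret H: Hoeffding_ineq ?M "{..<n}" "\<lambda>t xs. Y (xs t)" "\<lambda>_. -Bp" "\<lambda>_. Bp" 0
    by unfold_locales (use ind AEt expt in auto)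
  have pos: "(\<Sum>i<n. (Bp - - Bp)\<^sup>2) > 0" using n Bp by simp
  have "M.prob {xs \<in> space ?M. \<bar>(\<Sum>t<n. Y (xs t)) - 0\<bar> \<ge> real n * \<epsilon>}
        \<le> 2 * exp (- 2 * (real n * \<epsilon>)\<^sup>2 / (\<Sum>i<n. (Bp - - Bp)\<^sup>2))"
    using H.Hoeffding_ineq_abs_ge[OF _ pos, of "real n * \<epsilon>"] e by simp
  also have "- 2 * (real n * \<epsilon>)\<^sup>2 / (\<Sum>i<n. (Bp - - Bp)\<^sup>2) = - (real n * \<epsilon>\<^sup>2 / (2 * Bp\<^sup>2))"
    using n Bp by (simp add: power2_eq_square field_simps)
  finally show ?thesis by simp
qed

lemma max_norm_le_iff:
  fixes M :: "real ^ 'k2::finite ^ 'k1::finite"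
  shows "max_norm M \<le> c \<longleftrightarrow> (\<forall>i j. \<bar>M $ i $ j\<bar> \<le> c)"
  unfolding max_norm_def by (subst Max_le_iff) auto

theorem propositionE1:
  fixes X :: "(real ^ 'p::finite) set"
    and \<Phi> :: "real ^ 'p \<Rightarrow> real ^ 'k2::finite ^ 'k1::finite"
    and R :: "real ^ 'k2 ^ 'k1 \<Rightarrow> real"
    and \<Theta>s :: "real ^ 'k2 ^ 'k1"
    and r d \<phi>max \<delta> \<epsilon> :: real
    and n :: nat
  assumes X_meas: "X \<in> sets lebesgue"
    and X_bounded: "bounded X"
    and X_pos: "0 < emeasure lebesgue X"
    and Phi_meas: "\<Phi> \<in> borel_measurable lebesgue"
    and R_norm: "is_norm R"
    and R_Theta: "R \<Theta>s \<le> r"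
    and dual_bound: "\<forall>x\<in>X. dual_norm R (\<Phi> x) \<le> d"
    and max_bound: "\<forall>x\<in>X. max_norm (\<Phi> x) \<le> \<phi>max"
    and delta: "0 < \<delta>" "\<delta> < 1"
    and eps: "0 < \<epsilon>"
    and n_large: "real n > 8 * \<phi>max ^ 2 * exp (4 * r * d) / \<epsilon> ^ 2
                          * ln (2 * real CARD('k1) * real CARD('k2) / \<delta>)"
  shows "measure (PiM {..<n} (\<lambda>_. exp_fam_dist X \<Phi> \<Theta>s))
           {xs \<in> space (PiM {..<n} (\<lambda>_. exp_fam_dist X \<Phi> \<Theta>s)).
              max_norm (grad_loss_n X \<Phi> n xs \<Theta>s) \<le> \<epsilon>} \<ge> 1 - \<delta>"
proof -
  note ctx = X_meas X_bounded X_pos Phi_meas R_norm R_Theta dual_bound max_bound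
  define P where "P = exp_fam_dist X \<Phi> \<Theta>s"
  define M where "M = PiM {..<n} (\<lambda>_. P)"
  define B where "B = 2 * \<phi>max * exp (2 * r * d)"
  define k where "k = real CARD('k1) * real CARD('k2)"
  define L where "L = ln (2 * k / \<delta>)"
  define Y where "Y = Yf X \<Phi> \<Theta>s"
  have probP: "prob_space P" unfolding P_def by (rule prob_P[OF ctx])
  interpret Mp: prob_space M unfolding M_def using probP by (intro prob_space_PiM)
  have c1: "real CARD('k1) \<ge> 1" "real CARD('k2) \<ge> 1"
  proof -
    have "0 < CARD('k1)" "0 < CARD('k2)" by simp_all
    thus "real CARD('k1) \<ge> 1" "real CARD('k2) \<ge> 1" by linarith+
  qed
  have k1: "k \<ge> 1" unfolding k_def using mult_mono[OF c1(1) c1(2)] by simp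
  have L_pos: "L > 0" unfolding L_def using k1 delta by (simp add: field_simps)
  have B_nonneg: "B \<ge> 0" unfolding B_def using phi_nonneg[OF ctx] by simp
  have nB: "real n > 2 * B\<^sup>2 * L / \<epsilon>\<^sup>2"
  proof -
    have e4: "exp (4 * r * d) = (exp (2 * r * d))\<^sup>2" by (simp add: power2_eq_square exp_add[symmetric])
    have eB: "B\<^sup>2 = 4 * \<phi>max ^ 2 * exp (4 * r * d)" unfolding B_def e4 by (simp add: power_mult_distrib)
    have eq: "2 * B\<^sup>2 * L / \<epsilon>\<^sup>2 = 8 * \<phi>max ^ 2 * exp (4 * r * d) / \<epsilon> ^ 2 * L" unfolding eB by simp
    have Leq: "L = ln (2 * real CARD('k1) * real CARD('k2) / \<delta>)" unfolding L_def k_def by (simp add: mult.assoc)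
    show ?thesis using n_large unfolding Leq[symmetric] eq by linarith
  qed
  have n_pos: "n > 0"
  proof -
    have "2 * B\<^sup>2 * L / \<epsilon>\<^sup>2 \<ge> 0" using L_pos by simp
    thus ?thesis using nB by (cases n) auto
  qed
  define Bp where "Bp = sqrt (real n * \<epsilon>\<^sup>2 / (2 * L))"
  have Bp2: "Bp\<^sup>2 = real n * \<epsilon>\<^sup>2 / (2 * L)" unfolding Bp_def using L_pos by simp
  have B_lt: "B < Bp" unfolding Bp_def
  proof (rule real_less_rsqrt)
    show "B\<^sup>2 < real n * \<epsilon>\<^sup>2 / (2 * L)" using nB L_pos eps by (simp add: field_simps)
  qed
  have Bp_pos: "Bp > 0" using B_lt B_nonneg by simp
  define A where "A u v = {xs \<in> space M. \<bar>\<Sum>t<n. Y u v (xs t)\<bar> \<ge> real n * \<epsilon>}" for u v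
  have Ym[measurable]: "Y u v \<in> borel_measurable P" for u v
    unfolding Y_def P_def by (rule Y_meas[OF ctx])
  have probA: "measure M (A u v) \<le> \<delta> / k" for u v
  proof -
    have yb: "\<bar>Y u v x\<bar> \<le> Bp" if "x \<in> X" for x
      using Y_bound[OF ctx that, of u v] B_lt unfolding Y_def B_def by linarith
    have AEb: "AE x in P. \<bar>Y u v x\<bar> \<le> Bp"
      using AE_P[OF ctx] unfolding P_def[symmetric]
      by eventually_elim (use yb in auto)
    have "measure M (A u v) \<le> 2 * exp (- (real n * \<epsilon>\<^sup>2 / (2 * Bp\<^sup>2)))"
      unfolding A_def M_def
      by (rule hoeff_step[OF probP Ym AEb _ n_pos Bp_pos]) (use Y_mean[OF ctx] eps in \<open>auto simp: Y_def P_def\<close>)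
    also have "real n * \<epsilon>\<^sup>2 / (2 * Bp\<^sup>2) = L"
      unfolding Bp2 using L_pos n_pos eps by (simp add: field_simps)
    also have "2 * exp (- L) = \<delta> / k"
      unfolding L_def using k1 delta by (simp add: exp_minus field_simps)
    finally show ?thesis .
  qed
  have A_sets: "A u v \<in> sets M" for u v
    unfolding A_def M_def by measurable
  define S where "S = {xs \<in> space M. max_norm (grad_loss_n X \<Phi> n xs \<Theta>s) \<le> \<epsilon>}"
  have grad_eq: "grad_loss_n X \<Phi> n xs \<Theta>s $ u $ v = - (1 / real n) * (\<Sum>t<n. Y u v (xs t))" for xs u v
    unfolding grad_formula Y_def Yf_def[OF ctx] ..
  have S_eq: "S = {xs \<in> space M. \<forall>u v. \<bar>- (1 / real n) * (\<Sum>t<n. Y u v (xs t))\<bar> \<le> \<epsilon>}"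
    unfolding S_def max_norm_le_iff grad_eq ..
  have S_sets: "S \<in> sets M"
    unfolding S_eq M_def by measurable
  have sub: "space M - S \<subseteq> (\<Union>uv\<in>UNIV. A (fst uv) (snd uv))"
  proof
    fix xs assume xs: "xs \<in> space M - S"
    then obtain u v where uv: "\<bar>- (1 / real n) * (\<Sum>t<n. Y u v (xs t))\<bar> > \<epsilon>"
      unfolding S_eq by (auto simp: not_le)
    hence "\<bar>\<Sum>t<n. Y u v (xs t)\<bar> \<ge> real n * \<epsilon>"
      using n_pos by (simp add: abs_mult field_simps)
    thus "xs \<in> (\<Union>uv\<in>UNIV. A (fst uv) (snd uv))" using xs unfolding A_def by force
  qed
  have "measure M (space M - S) \<le> measure M (\<Union>uv\<in>UNIV. A (fst uv) (snd uv))"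
    using sub A_sets by (intro Mp.finite_measure_mono) auto
  also have "\<dots> \<le> (\<Sum>uv\<in>UNIV. measure M (A (fst uv) (snd uv)))"
    using A_sets by (intro measure_UNION_le) auto
  also have "\<dots> \<le> (\<Sum>uv\<in>(UNIV :: ('k1 \<times> 'k2) set). \<delta> / k)"
    using probA by (intro sum_mono) auto
  also have "\<dots> = \<delta>"
  proof -
    have "card (UNIV :: ('k1 \<times> 'k2) set) = CARD('k1) * CARD('k2)"
      by (simp add: UNIV_Times_UNIV[symmetric] card_cartesian_product del: UNIV_Times_UNIV)
    thus ?thesis unfolding k_def using k1[unfolded k_def] by simp
  qed
  finally have "measure M (space M - S) \<le> \<delta>" .
  hence "measure M S \<ge> 1 - \<delta>" using Mp.prob_compl[OF S_sets] by simp
  thus ?thesis unfolding S_def M_def P_def .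
qed

end
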